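(* Let $(C_q,\varphi)$ be a complex unit gain cycle of length $q\ge 3$. Then $r(C_q,\varphi)=2q-2c(C_q)-2\alpha(C_q)$ if and only if either $q$ is even and $\varphi(C_q)=(-1)^{q/2}$, or $q$ is odd and $\mathrm{Re}\big((-1)^{(q-1)/2}\varphi(C_q)\big)=0$.
   Context: A complex unit gain graph $(G,\varphi)$ is a simple finite graph $G$ with a gain function $\varphi$ assigning to each oriented edge $e_{ij}$ a complex number of modulus $1$ with $\varphi(e_{ji})=\overline{\varphi(e_{ij})}$; its adjacency matrix has $(i,j)$-entry $\varphi(e_{ij})$ for adjacent $v_i,v_j$ and $0$ otherwise, and $r(G,\varphi)$ is its rank. $\alpha$ is the independence number and $c(G)=|E(G)|-|V(G)|+\omega(G)$ the cyclomatic number ($\omega$ = number of components). For a cycle $C_q=u_1\cdots u_qu_1$, $\varphi(C_q)=\varphi(e_{u_1u_2})\cdots\varphi(e_{u_{q-1}u_q})\varphi(e_{u_qu_1})$. *)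

theory Defs
  imports Complex_Main "Jordan_Normal_Form.DL_Rank"
begin

definition simple_graph :: "'a set \<Rightarrow> ('a \<Rightarrow> 'a \<Rightarrow> bool) \<Rightarrow> bool" where
  "simple_graph V E \<longleftrightarrow> finite V \<and> (\<forall>x y. E x y \<longrightarrow> x \<in> V \<and> y \<in> V \<and> x \<noteq> y \<and> E y x)"

definition edge_set :: "'a set \<Rightarrow> ('a \<Rightarrow> 'a \<Rightarrow> bool) \<Rightarrow> 'a set set" where
  "edge_set V E = {{x, y} | x y. x \<in> V \<and> y \<in> V \<and> E x y}"

definition connected_rel :: "'a set \<Rightarrow> ('a \<Rightarrow> 'a \<Rightarrow> bool) \<Rightarrow> ('a \<times> 'a) set" where
  "connected_rel V E = {(x, y). x \<in> V \<and> y \<in> V \<and> (\<lambda>a b. a \<in> V \<and> b \<in> V \<and> E a b)\<^sup>*\<^sup>* x y}"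

definition num_components :: "'a set \<Rightarrow> ('a \<Rightarrow> 'a \<Rightarrow> bool) \<Rightarrow> nat" where
  "num_components V E = card (V // connected_rel V E)"

definition cyclomatic_number :: "'a set \<Rightarrow> ('a \<Rightarrow> 'a \<Rightarrow> bool) \<Rightarrow> int" where
  "cyclomatic_number V E = int (card (edge_set V E)) - int (card V) + int (num_components V E)"

definition independent_set :: "'a set \<Rightarrow> ('a \<Rightarrow> 'a \<Rightarrow> bool) \<Rightarrow> 'a set \<Rightarrow> bool" where
  "independent_set V E S \<longleftrightarrow> S \<subseteq> V \<and> (\<forall>x\<in>S. \<forall>y\<in>S. \<not> E x y)"

definition independence_number :: "'a set \<Rightarrow> ('a \<Rightarrow> 'a \<Rightarrow> bool) \<Rightarrow> nat" where
  "independence_number V E = Max (card ` {S. independent_set V E S})"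

text \<open>Complex unit gain function: phi x y is the gain of the oriented edge from x to y.\<close>
definition gain_function :: "'a set \<Rightarrow> ('a \<Rightarrow> 'a \<Rightarrow> bool) \<Rightarrow> ('a \<Rightarrow> 'a \<Rightarrow> complex) \<Rightarrow> bool" where
  "gain_function V E \<phi> \<longleftrightarrow> (\<forall>x y. E x y \<longrightarrow> norm (\<phi> x y) = 1 \<and> \<phi> y x = cnj (\<phi> x y))"

definition gain_adj_matrix :: "nat \<Rightarrow> (nat \<Rightarrow> nat \<Rightarrow> bool) \<Rightarrow> (nat \<Rightarrow> nat \<Rightarrow> complex) \<Rightarrow> complex mat" where
  "gain_adj_matrix n E \<phi> = mat n n (\<lambda>(i, j). if E i j then \<phi> i j else 0)"

definition gain_rank :: "nat \<Rightarrow> (nat \<Rightarrow> nat \<Rightarrow> bool) \<Rightarrow> (nat \<Rightarrow> nat \<Rightarrow> complex) \<Rightarrow> nat" where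
  "gain_rank n E \<phi> = vec_space.rank n (gain_adj_matrix n E \<phi>)"

definition cycle_adj :: "nat \<Rightarrow> nat \<Rightarrow> nat \<Rightarrow> bool" where
  "cycle_adj q i j \<longleftrightarrow> i < q \<and> j < q \<and> (j = Suc i mod q \<or> i = Suc j mod q)"

text \<open>phi(C_q) = phi(e_{u1 u2}) ... phi(e_{uq u1}) with u_k = k - 1.\<close>
definition cycle_gain :: "nat \<Rightarrow> (nat \<Rightarrow> nat \<Rightarrow> complex) \<Rightarrow> complex" where
  "cycle_gain q \<phi> = (\<Prod>i<q. \<phi> i (Suc i mod q))"

end

theory Submission
  imports Defs
begin

lemma mv_entry:
  assumes "A \<in> carrier_mat nr nc" "v \<in> carrier_vec nc" "i < nr"
  shows "(A *\<^sub>v v) $ i = (\<Sum>j<nc. A $$ (i,j) * v $ j)"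
  using assms by (auto simp: scalar_prod_def lessThan_atLeast0 intro!: sum.cong)

lemma (in vec_space) rank_lb:
  assumes A: "A \<in> carrier_mat n n" and k: "k \<le> n"
    and ker: "\<And>x. x \<in> carrier_vec n \<Longrightarrow> A *\<^sub>v x = 0\<^sub>v n \<Longrightarrow> (\<forall>j<k. x $ j = 0) \<Longrightarrow> x = 0\<^sub>v n"
  shows "n - k \<le> rank A"
proof -
  define B where "B = mat n (n-k) (\<lambda>(i,j). A $$ (i, j+k))"
  have B: "B \<in> carrier_mat n (n-k)" by (simp add: B_def)
  have colB: "col B j = col A (j+k)" if "j < n-k" for j
    using that A by (auto simp: B_def col_def intro!: eq_vecI)
  have Bker: "w = 0\<^sub>v (n-k)" if w: "w \<in> carrier_vec (n-k)" and Bw: "B *\<^sub>v w = 0\<^sub>v n" for w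
  proof -
    define x where "x = vec n (\<lambda>i. if i < k then 0 else w $ (i-k))"
    have x: "x \<in> carrier_vec n" by (simp add: x_def)
    have "A *\<^sub>v x = 0\<^sub>v n"
    proof (rule eq_vecI)
      fix i assume "i < dim_vec (0\<^sub>v n :: 'a vec)"
      then have i: "i < n" by simp
      have "(A *\<^sub>v x) $ i = (\<Sum>j<n. A $$ (i,j) * x $ j)" by (rule mv_entry[OF A x i])
      also have "\<dots> = (\<Sum>j\<in>{k..<n}. A $$ (i,j) * x $ j)"
        by (rule sum.mono_neutral_right) (auto simp: x_def)
      also have "\<dots> = (\<Sum>j\<in>{0+k..<(n-k)+k}. A $$ (i,j) * x $ j)" using k by simp
      also have "\<dots> = (\<Sum>j\<in>{0..<n-k}. A $$ (i,j+k) * x $ (j+k))"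
        by (rule sum.shift_bounds_nat_ivl)
      also have "\<dots> = (\<Sum>j<n-k. B $$ (i,j) * w $ j)"
        by (auto simp: x_def B_def i lessThan_atLeast0 intro!: sum.cong)
      also have "\<dots> = (B *\<^sub>v w) $ i" by (rule mv_entry[OF B w i, symmetric])
      also have "\<dots> = 0" using Bw i by simp
      finally show "(A *\<^sub>v x) $ i = 0\<^sub>v n $ i" using i by simp
    qed (use A in simp)
    moreover have "\<forall>j<k. x $ j = 0" using k by (simp add: x_def)
    ultimately have "x = 0\<^sub>v n" using ker[OF x] by blast
    then show ?thesis
    proof (intro eq_vecI)
      fix j assume x0: "x = 0\<^sub>v n" and j: "j < dim_vec (0\<^sub>v (n - k) :: 'a vec)"
      have "w $ j = x $ (j+k)" using j k by (simp add: x_def)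
      also have "\<dots> = 0" using x0 j k by simp
      finally show "w $ j = 0\<^sub>v (n - k) $ j" using j by simp
    qed (use w in auto)
  qed
  have dist: "distinct (cols B)"
  proof (rule ccontr)
    assume "\<not> distinct (cols B)"
    then obtain i j where ij: "i < n-k" "j < n-k" "i \<noteq> j" "cols B ! i = cols B ! j"
      using B by (auto simp: distinct_conv_nth)
    then have cij: "col B i = col B j" using B by (metis carrier_matD(2) cols_nth)
    define w where "w = vec (n-k) (\<lambda>l. if l = i then 1 else if l = j then -1 else (0::'a))"
    have w: "w \<in> carrier_vec (n-k)" by (simp add: w_def)
    have "B *\<^sub>v w = 0\<^sub>v n"
    proof (rule eq_vecI)
      fix r assume "r < dim_vec (0\<^sub>v n :: 'a vec)"
      then have r: "r < n" by simp
      have "(B *\<^sub>v w) $ r = (\<Sum>l<n-k. B $$ (r,l) * w $ l)" by (rule mv_entry[OF B w r])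
      also have "\<dots> = (\<Sum>l<n-k. (if l = i then B $$ (r,l) else 0) - (if l = j then B $$ (r,l) else 0))"
        using ij by (auto simp: w_def intro!: sum.cong)
      also have "\<dots> = B $$ (r,i) - B $$ (r,j)" using ij by (simp add: sum_subtractf)
      also have "\<dots> = 0" using arg_cong[OF cij, of "\<lambda>v. v $ r"] B r ij by simp
      finally show "(B *\<^sub>v w) $ r = 0\<^sub>v n $ r" using r by simp
    qed (use B in simp)
    then have "w = 0\<^sub>v (n-k)" by (rule Bker[OF w])
    then have "w $ i = 0" using ij by simp
    then show False using ij by (simp add: w_def)
  qed
  have indpt: "lin_indpt (set (cols B))"
  proof
    assume "lin_dep (set (cols B))"
    then obtain v where "v \<in> carrier_vec (n-k)" "v \<noteq> 0\<^sub>v (n-k)" "B *\<^sub>v v = 0\<^sub>v n"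
      using lin_depE[OF B _ dist] by blast
    then show False using Bker by blast
  qed
  have sub: "set (cols B) \<subseteq> set (cols A)"
  proof
    fix c assume "c \<in> set (cols B)"
    then obtain j where j: "j < n-k" "c = col B j" using B by (auto simp: in_set_conv_nth)
    then have "c = col A (j+k)" using colB by simp
    moreover have "j + k < dim_col A" using j A by auto
    ultimately show "c \<in> set (cols A)" by (simp add: cols_def)
  qed
  have "card (set (cols B)) \<le> rank A" by (rule rank_ge_card_indpt[OF A sub indpt])
  moreover have "card (set (cols B)) = n - k" using distinct_card[OF dist] B by simp
  ultimately show ?thesis by simp
qed

lemma (in vec_space) rank_ub:
  assumes A: "A \<in> carrier_mat n n" and m: "m \<le> n"
    and sp: "\<And>k. m \<le> k \<Longrightarrow> k < n \<Longrightarrow> \<exists>w \<in> carrier_vec m. col A k = mat n m (\<lambda>(i,j). A $$ (i,j)) *\<^sub>v w"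
  shows "rank A \<le> m"
proof -
  define B where "B = mat n m (\<lambda>(i,j). A $$ (i,j))"
  have B: "B \<in> carrier_mat n m" by (simp add: B_def)
  have colB: "col B j = col A j" if "j < m" for j
    using that A m by (auto simp: B_def col_def intro!: eq_vecI)
  have cB: "set (cols B) \<subseteq> carrier_vec n" using B by (auto simp: cols_def)
  have cA: "set (cols A) \<subseteq> carrier_vec n" using A by (auto simp: cols_def)
  have inspan: "B *\<^sub>v w \<in> span (set (cols B))" if w: "w \<in> carrier_vec m" for w
  proof -
    have "B *\<^sub>v w = mat_of_cols n (cols B) *\<^sub>v vec (length (cols B)) (\<lambda>j. w $ j)"
      using B w by (metis carrier_matD(1) carrier_matD(2) cols_length carrier_vecD mat_of_cols_cols vec_eq_iff index_vec dim_vec)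
    also have "\<dots> = lincomb_list (\<lambda>j. w $ j) (cols B)"
      using cB by (subst lincomb_list_as_mat_mult) auto
    also have "\<dots> \<in> span_list (cols B)" by (auto simp: span_list_def)
    also have "span_list (cols B) = span (set (cols B))" by (rule span_list_as_span[OF cB])
    finally show ?thesis .
  qed
  have "set (cols A) \<subseteq> span (set (cols B))"
  proof
    fix c assume "c \<in> set (cols A)"
    then obtain k where k: "k < n" "c = col A k" using A by (auto simp: in_set_conv_nth)
    show "c \<in> span (set (cols B))"
    proof (cases "k < m")
      case True
      then have "c \<in> set (cols B)" using colB k B by (auto simp: cols_def)
      then show ?thesis using in_own_span[OF cB] by blast
    next
      case False
      then obtain w where "w \<in> carrier_vec m" "c = B *\<^sub>v w" using sp[of k] k by (auto simp: B_def)
      then show ?thesis using inspan by simp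
    qed
  qed
  then have s1: "span (set (cols A)) \<subseteq> span (set (cols B))" by (rule span_subsetI[OF cB])
  have "set (cols B) \<subseteq> set (cols A)"
  proof
    fix c assume "c \<in> set (cols B)"
    then obtain j where j: "j < m" "c = col B j" using B by (auto simp: in_set_conv_nth)
    then show "c \<in> set (cols A)" using colB A m by (auto simp: cols_def)
  qed
  then have s2: "span (set (cols B)) \<subseteq> span (set (cols A))" by (rule span_is_monotone)
  have "rank A = rank B" unfolding rank_def using s1 s2 by (metis subset_antisym)
  also have "\<dots> \<le> m" by (rule rank_le_nc[OF B])
  finally show ?thesis .
qed

definition ga :: "nat \<Rightarrow> (nat \<Rightarrow> nat \<Rightarrow> complex) \<Rightarrow> nat \<Rightarrow> complex" where
  "ga q \<phi> i = \<phi> i (Suc i mod q)"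

definition PP :: "nat \<Rightarrow> (nat \<Rightarrow> nat \<Rightarrow> complex) \<Rightarrow> nat \<Rightarrow> complex" where
  "PP q \<phi> i = (\<Prod>k<i. ga q \<phi> k)"

definition kerc :: "nat \<Rightarrow> complex \<Rightarrow> (nat \<Rightarrow> complex) \<Rightarrow> bool" where
  "kerc q \<Phi> y \<longleftrightarrow> (\<forall>i. 0 < i \<and> i + 1 < q \<longrightarrow> y (i+1) + y (i-1) = 0)
     \<and> y 1 + cnj \<Phi> * y (q-1) = 0 \<and> \<Phi> * y 0 + y (q-2) = 0"

lemma rec_sol:
  assumes r: "\<forall>i. 0 < i \<and> i + 1 < q \<longrightarrow> y (i+1) + y (i-1) = (0::complex)"
  shows "2*k < q \<Longrightarrow> y (2*k) = (-1)^k * y 0" and "2*k+1 < q \<Longrightarrow> y (2*k+1) = (-1)^k * y 1"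
proof (induction k)
  case (Suc k)
  { case 1
    have "y (2*k+1+1) + y (2*k+1-1) = 0" using r 1 by auto
    then show ?case using Suc.IH(1) 1 by (simp add: eq_neg_iff_add_eq_0[symmetric]) }
  { case 2
    have "y (2*k+2+1) + y (2*k+2-1) = 0" using r 2 by auto
    then have e: "y (Suc (Suc (Suc (2*k)))) = - y (2*k+1)" by (simp add: eq_neg_iff_add_eq_0 numeral_3_eq_3)
    show ?case using Suc.IH(2) 2 e by simp }
qed auto

lemma rec_cons:
  "\<forall>i. 0 < i \<and> i + 1 < q \<longrightarrow> (\<lambda>j. (-1)^(j div 2) * (if even j then c0 else c1)) (i+1)
     + (\<lambda>j. (-1)^(j div 2) * (if even j then c0 else c1)) (i-1) = (0::complex)"
proof (intro allI impI)
  fix i :: nat assume i: "0 < i \<and> i + 1 < q"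
  then obtain l where l: "i = Suc l" by (cases i) auto
  have "(i+1) div 2 = Suc (l div 2)" using l by simp
  then show "(\<lambda>j. (-1)^(j div 2) * (if even j then c0 else c1)) (i+1)
     + (\<lambda>j. (-1)^(j div 2) * (if even j then c0 else c1)) (i-1) = (0::complex)"
    using l by auto
qed

lemma unit_cnj: "norm (z::complex) = 1 \<Longrightarrow> z * cnj z = 1"
  by (metis complex_norm_square mult.commute of_real_1 power_one)

lemma sum2:
  assumes "a < (q::nat)" "b < q" "a \<noteq> b" "\<And>j. j < q \<Longrightarrow> P j \<longleftrightarrow> j = a \<or> j = b"
  shows "(\<Sum>j<q. if P j then f j else 0) = f a + (f b :: complex)"
proof -
  have "(\<Sum>j<q. if P j then f j else 0) = (\<Sum>j<q. (if j = a then f j else 0) + (if j = b then f j else 0))"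
    using assms by (intro sum.cong) auto
  also have "\<dots> = (\<Sum>j<q. if j = a then f j else 0) + (\<Sum>j<q. if j = b then f j else 0)"
    by (rule sum.distrib)
  also have "(\<Sum>j<q. if j = a then f j else 0) = f a" using assms(1) by (subst sum.delta; auto)
  also have "(\<Sum>j<q. if j = b then f j else 0) = f b" using assms(2) by (subst sum.delta; auto)
  finally show ?thesis .
qed

lemma suc_mod: "j < q \<Longrightarrow> Suc j mod q = (if Suc j = q then 0 else Suc j)"
  by auto

lemma cyc_iff: "i < q \<Longrightarrow> j < q \<Longrightarrow> cycle_adj q i j \<longleftrightarrow>
   (j = (if Suc i = q then 0 else Suc i) \<or> i = (if Suc j = q then 0 else Suc j))"
  unfolding cycle_adj_def using suc_mod[of i q] suc_mod[of j q] by simp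

locale cyc =
  fixes q :: nat and \<phi> :: "nat \<Rightarrow> nat \<Rightarrow> complex"
  assumes q3: "q \<ge> 3" and gf: "gain_function {0..<q} (cycle_adj q) \<phi>"

begin

lemma adj_suc: "i < q \<Longrightarrow> cycle_adj q i (Suc i mod q)"
  using q3 by (simp add: cycle_adj_def)

lemma gain_facts: "i < q \<Longrightarrow> norm (ga q \<phi> i) = 1 \<and> \<phi> (Suc i mod q) i = cnj (ga q \<phi> i)"
proof -
  assume i: "i < q"
  have "\<forall>x y. cycle_adj q x y \<longrightarrow> norm (\<phi> x y) = 1 \<and> \<phi> y x = cnj (\<phi> x y)"
    using gf unfolding gain_function_def by blast
  then show ?thesis using adj_suc[OF i] unfolding ga_def by blast
qed

lemma ga_norm: "i < q \<Longrightarrow> norm (ga q \<phi> i) = 1"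
  using gain_facts by blast

lemma phi_back: "j < q \<Longrightarrow> \<phi> (Suc j mod q) j = cnj (ga q \<phi> j)"
  using gain_facts by blast

lemma PP_Suc: "PP q \<phi> (Suc i) = PP q \<phi> i * ga q \<phi> i"
  by (simp add: PP_def)

lemma PP_norm: "i \<le> q \<Longrightarrow> norm (PP q \<phi> i) = 1"
proof -
  assume i: "i \<le> q"
  have "norm (PP q \<phi> i) = (\<Prod>k<i. norm (ga q \<phi> k))" by (simp add: PP_def prod_norm)
  also have "\<dots> = 1" using i by (intro prod.neutral) (auto simp: ga_norm)
  finally show ?thesis .
qed

lemma PP_unit: "i \<le> q \<Longrightarrow> PP q \<phi> i * cnj (PP q \<phi> i) = 1"
  using PP_norm unit_cnj by blast

lemma ga_unit: "i < q \<Longrightarrow> ga q \<phi> i * cnj (ga q \<phi> i) = 1"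
  using ga_norm unit_cnj by blast

lemma PP_q: "PP q \<phi> q = cycle_gain q \<phi>"
  by (simp add: PP_def cycle_gain_def ga_def)

abbreviation "AA \<equiv> gain_adj_matrix q (cycle_adj q) \<phi>"

lemma AA_carrier: "AA \<in> carrier_mat q q"
  by (simp add: gain_adj_matrix_def)

lemma row_gen:
  assumes x: "x \<in> carrier_vec q" and i: "i < q" and a: "a < q" and b: "b < q" and ab: "a \<noteq> b"
    and nb: "\<And>j. j < q \<Longrightarrow> cycle_adj q i j \<longleftrightarrow> j = a \<or> j = b"
  shows "(AA *\<^sub>v x) $ i = \<phi> i a * x $ a + \<phi> i b * x $ b"
proof -
  have "(AA *\<^sub>v x) $ i = (\<Sum>j<q. AA $$ (i,j) * x $ j)" by (rule mv_entry[OF AA_carrier x i])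
  also have "\<dots> = (\<Sum>j<q. if cycle_adj q i j then \<phi> i j * x $ j else 0)"
    using i by (intro sum.cong) (auto simp: gain_adj_matrix_def)
  also have "\<dots> = \<phi> i a * x $ a + \<phi> i b * x $ b" by (rule sum2[OF a b ab nb])
  finally show ?thesis .
qed

lemma row0:
  assumes x: "x \<in> carrier_vec q"
  shows "(AA *\<^sub>v x) $ 0 = ga q \<phi> 0 * x $ 1 + cnj (ga q \<phi> (q-1)) * x $ (q-1)"
proof -
  have "(AA *\<^sub>v x) $ 0 = \<phi> 0 1 * x $ 1 + \<phi> 0 (q-1) * x $ (q-1)"
    using q3 by (intro row_gen[OF x]) (auto simp: cyc_iff)
  moreover have "\<phi> 0 1 = ga q \<phi> 0" using q3 by (simp add: ga_def)
  moreover have "\<phi> 0 (q-1) = cnj (ga q \<phi> (q-1))" using phi_back[of "q-1"] q3 by simp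
  ultimately show ?thesis by simp
qed

lemma rowmid:
  assumes x: "x \<in> carrier_vec q" and i: "0 < i" "i + 1 < q"
  shows "(AA *\<^sub>v x) $ i = ga q \<phi> i * x $ (i+1) + cnj (ga q \<phi> (i-1)) * x $ (i-1)"
proof -
  have "(AA *\<^sub>v x) $ i = \<phi> i (i+1) * x $ (i+1) + \<phi> i (i-1) * x $ (i-1)"
    using q3 i by (intro row_gen[OF x]) (auto simp: cyc_iff)
  moreover have "\<phi> i (i+1) = ga q \<phi> i" using i by (simp add: ga_def)
  moreover have "\<phi> i (i-1) = cnj (ga q \<phi> (i-1))" using phi_back[of "i-1"] i by simp
  ultimately show ?thesis by simp
qed

lemma rowlast:
  assumes x: "x \<in> carrier_vec q"
  shows "(AA *\<^sub>v x) $ (q-1) = ga q \<phi> (q-1) * x $ 0 + cnj (ga q \<phi> (q-2)) * x $ (q-2)"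
proof -
  have "(AA *\<^sub>v x) $ (q-1) = \<phi> (q-1) 0 * x $ 0 + \<phi> (q-1) (q-2) * x $ (q-2)"
    using q3 by (intro row_gen[OF x]) (auto simp: cyc_iff)
  moreover have "\<phi> (q-1) 0 = ga q \<phi> (q-1)" using q3 by (simp add: ga_def)
  moreover have "\<phi> (q-1) (q-2) = cnj (ga q \<phi> (q-2))" using phi_back[of "q-2"] q3
    by (simp add: Suc_diff_Suc numeral_2_eq_2)
  ultimately show ?thesis by simp
qed

end

context cyc begin

abbreviation "Phi \<equiv> cycle_gain q \<phi>"

lemma PP0: "PP q \<phi> 0 = 1" by (simp add: PP_def)

lemma PP_nz: "i \<le> q \<Longrightarrow> PP q \<phi> i \<noteq> 0"
  using PP_norm by force

lemma ker_iff:
  assumes x: "x \<in> carrier_vec q" and xy: "\<And>j. j < q \<Longrightarrow> x $ j = cnj (PP q \<phi> j) * y j"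
  shows "AA *\<^sub>v x = 0\<^sub>v q \<longleftrightarrow> kerc q Phi y"
proof -
  have eqv: "AA *\<^sub>v x = 0\<^sub>v q \<longleftrightarrow> (\<forall>i<q. (AA *\<^sub>v x) $ i = 0)"
    using AA_carrier x by (auto simp: vec_eq_iff)
  have r0: "(AA *\<^sub>v x) $ 0 = y 1 + cnj Phi * y (q-1)"
  proof -
    have P1: "PP q \<phi> 1 = ga q \<phi> 0" using PP_Suc[of 0] PP0 by simp
    have Pq: "Phi = PP q \<phi> (q-1) * ga q \<phi> (q-1)"
      using PP_Suc[of "q-1"] PP_q q3 by (simp add: Suc_diff_1)
    have "(AA *\<^sub>v x) $ 0 = ga q \<phi> 0 * (cnj (ga q \<phi> 0) * y 1)
          + cnj (ga q \<phi> (q-1)) * (cnj (PP q \<phi> (q-1)) * y (q-1))"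
      using row0[OF x] xy[of 1] xy[of "q-1"] q3 P1 by simp
    also have "\<dots> = (ga q \<phi> 0 * cnj (ga q \<phi> 0)) * y 1 + cnj Phi * y (q-1)"
      by (simp add: Pq algebra_simps)
    also have "\<dots> = y 1 + cnj Phi * y (q-1)" using ga_unit[of 0] q3 by simp
    finally show ?thesis .
  qed
  have rl: "PP q \<phi> (q-1) * (AA *\<^sub>v x) $ (q-1) = Phi * y 0 + y (q-2)"
  proof -
    define Q where "Q = PP q \<phi> (q-2)"
    define g where "g = ga q \<phi> (q-2)"
    have qq: "q - 1 = Suc (q-2)" using q3 by simp
    have Pq1: "PP q \<phi> (q-1) = Q * g" using PP_Suc[of "q-2"] unfolding Q_def g_def qq by simp
    have Pq: "Phi = PP q \<phi> (q-1) * ga q \<phi> (q-1)"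
      using PP_Suc[of "q-1"] PP_q q3 by (simp add: Suc_diff_1)
    have "PP q \<phi> (q-1) * (AA *\<^sub>v x) $ (q-1) = PP q \<phi> (q-1) * (ga q \<phi> (q-1) * (cnj (PP q \<phi> 0) * y 0)
          + cnj g * (cnj Q * y (q-2)))"
      using rowlast[OF x] xy[of 0] xy[of "q-2"] q3 unfolding Q_def g_def by simp
    also have "\<dots> = Phi * y 0 + (Q * cnj Q) * (g * cnj g) * y (q-2)"
      unfolding Pq Pq1 PP0 by (simp add: algebra_simps)
    also have "\<dots> = Phi * y 0 + y (q-2)"
      using PP_unit[of "q-2"] ga_unit[of "q-2"] q3 unfolding Q_def g_def by simp
    finally show ?thesis .
  qed
  have rm: "PP q \<phi> i * (AA *\<^sub>v x) $ i = y (i+1) + y (i-1)" if i: "0 < i" "i + 1 < q" for i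
  proof -
    obtain l where l: "i = Suc l" using i by (cases i) auto
    define Q where "Q = PP q \<phi> l"
    define g where "g = ga q \<phi> l"
    define h where "h = ga q \<phi> i"
    have Pi: "PP q \<phi> i = Q * g" using PP_Suc[of l] l unfolding Q_def g_def by simp
    have Pi1: "PP q \<phi> (i+1) = Q * g * h" using PP_Suc[of i] Pi unfolding h_def by simp
    have "PP q \<phi> i * (AA *\<^sub>v x) $ i = PP q \<phi> i * (h * (cnj (PP q \<phi> (i+1)) * y (i+1))
          + cnj g * (cnj Q * y (i-1)))"
      using rowmid[OF x i] xy[of "i+1"] xy[of "i-1"] i l unfolding Q_def g_def h_def by simp
    also have "\<dots> = (Q * cnj Q) * (g * cnj g) * (h * cnj h) * y (i+1) + (Q * cnj Q) * (g * cnj g) * y (i-1)"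
      unfolding Pi1 Pi by (simp add: algebra_simps)
    also have "\<dots> = y (i+1) + y (i-1)"
      using PP_unit[of l] ga_unit[of l] ga_unit[of i] i l unfolding Q_def g_def h_def by simp
    finally show ?thesis .
  qed
  have "(\<forall>i<q. (AA *\<^sub>v x) $ i = 0) \<longleftrightarrow> kerc q Phi y"
  proof
    assume z: "\<forall>i<q. (AA *\<^sub>v x) $ i = 0"
    show "kerc q Phi y" unfolding kerc_def
    proof (intro conjI allI impI)
      fix i assume i: "0 < i \<and> i + 1 < q"
      show "y (i+1) + y (i-1) = 0" using rm[of i] z i by simp
    next
      show "y 1 + cnj Phi * y (q-1) = 0" using r0 z q3 by simp
    next
      show "Phi * y 0 + y (q-2) = 0" using rl z q3 by simp
    qed
  next
    assume k: "kerc q Phi y"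
    show "\<forall>i<q. (AA *\<^sub>v x) $ i = 0"
    proof (intro allI impI)
      fix i assume i: "i < q"
      consider "i = 0" | "0 < i \<and> i + 1 < q" | "i = q - 1" using i by linarith
      then show "(AA *\<^sub>v x) $ i = 0"
      proof cases
        case 1 then show ?thesis using r0 k by (simp add: kerc_def)
      next
        case 2
        then have "PP q \<phi> i * (AA *\<^sub>v x) $ i = 0" using rm[of i] k by (simp add: kerc_def)
        then show ?thesis using PP_nz[of i] i by simp
      next
        case 3
        then have "PP q \<phi> i * (AA *\<^sub>v x) $ i = 0" using rl k by (simp add: kerc_def)
        then show ?thesis using PP_nz[of i] i by simp
      qed
    qed
  qed
  then show ?thesis using eqv by simp
qed

end

definition YY :: "complex \<Rightarrow> complex \<Rightarrow> nat \<Rightarrow> complex" where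
  "YY c0 c1 j = (-1)^(j div 2) * (if even j then c0 else c1)"

lemma YY_even: "YY c0 c1 (2*k) = (-1)^k * c0" by (simp add: YY_def)
lemma YY_odd: "YY c0 c1 (2*k+1) = (-1)^k * c1" by (simp add: YY_def)
lemma YY_rec: "\<forall>i. 0 < i \<and> i + 1 < q \<longrightarrow> YY c0 c1 (i+1) + YY c0 c1 (i-1) = 0"
  using rec_cons[of q c0 c1] unfolding YY_def by simp

lemma cnj_neg1_pow [simp]: "cnj ((-1::complex)^k) = (-1)^k" by simp
lemma neg1_sq: "((-1::complex)^k) * ((-1)^k) = 1"
  by (simp add: power_mult_distrib[symmetric])

context cyc begin

lemma kerc_vals:
  assumes "kerc q Phi y"
  shows "2*k < q \<Longrightarrow> y (2*k) = (-1)^k * y 0" and "2*k+1 < q \<Longrightarrow> y (2*k+1) = (-1)^k * y 1"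
  using rec_sol[of q y] assms unfolding kerc_def by blast+

lemma kerc_zero:
  assumes k: "kerc q Phi y" and "y 0 = 0" "y 1 = 0" "j < q"
  shows "y j = 0"
proof (cases "even j")
  case True
  then obtain k where "j = 2*k" by blast
  then show ?thesis using kerc_vals(1)[OF k, of k] assms by simp
next
  case False
  then obtain k where "j = 2*k+1" using oddE by blast
  then show ?thesis using kerc_vals(2)[OF k, of k] assms by simp
qed

lemma odd_y1:
  assumes o: "odd q" and k: "kerc q Phi y" and y0: "y 0 = 0"
  shows "y 1 = 0"
proof -
  obtain m where m: "q = 2*m+1" using o oddE by blast
  then obtain m' where m': "m = Suc m'" using q3 by (cases m) auto
  have qq: "q - 2 = 2*m'+1" using m m' by simp
  have "y (q-2) = (-1)^m' * y 1" unfolding qq by (rule kerc_vals(2)[OF k]) (use m m' in simp)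
  moreover have "Phi * y 0 + y (q-2) = 0" using k by (simp add: kerc_def)
  ultimately show ?thesis using y0 by simp
qed

lemma odd_nc:
  assumes o: "odd q" and k: "kerc q Phi y" and re: "Re Phi \<noteq> 0"
  shows "y 0 = 0"
proof -
  obtain m where m: "q = 2*m+1" using o oddE by blast
  then obtain m' where m': "m = Suc m'" using q3 by (cases m) auto
  define u :: complex where "u = (-1)^m'"
  have uu: "u * u = 1" unfolding u_def by (rule neg1_sq)
  have q1: "q - 1 = 2*m" using m by simp
  have qq: "q - 2 = 2*m'+1" using m m' by simp
  have a: "y (q-1) = - u * y 0" unfolding q1 using kerc_vals(1)[OF k, of m] m m' u_def by simp
  have b: "y (q-2) = u * y 1" unfolding qq using kerc_vals(2)[OF k, of m'] m m' u_def by simp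
  have e1: "y 1 + cnj Phi * y (q-1) = 0" and e2: "Phi * y 0 + y (q-2) = 0"
    using k by (auto simp: kerc_def)
  from e1 a have y1: "y 1 = u * cnj Phi * y 0" by (simp add: algebra_simps eq_neg_iff_add_eq_0[symmetric])
  from e2 b y1 have "Phi * y 0 + (u * u) * cnj Phi * y 0 = 0" by (simp add: algebra_simps)
  then have "(Phi + cnj Phi) * y 0 = 0" using uu by (simp add: algebra_simps)
  moreover have "Phi + cnj Phi \<noteq> 0" using re by (simp add: complex_add_cnj)
  ultimately show ?thesis by simp
qed

lemma odd_c:
  assumes o: "odd q" and re: "Re Phi = 0"
  shows "\<exists>c1. kerc q Phi (YY 1 c1)"
proof -
  obtain m where m: "q = 2*m+1" using o oddE by blast
  then obtain m' where m': "m = Suc m'" using q3 by (cases m) auto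
  define u :: complex where "u = (-1)^m'"
  have uu: "u * u = 1" unfolding u_def by (rule neg1_sq)
  have q1: "q - 1 = 2*m" using m by simp
  have qq: "q - 2 = 2*m'+1" using m m' by simp
  define c1 where "c1 = u * cnj Phi"
  have a: "YY 1 c1 (q-1) = - u" unfolding q1 YY_even using m' u_def by simp
  have b: "YY 1 c1 (q-2) = u * c1" unfolding qq YY_odd using u_def by simp
  have pc: "Phi + cnj Phi = 0" using re by (simp add: complex_add_cnj)
  have "kerc q Phi (YY 1 c1)" unfolding kerc_def
  proof (intro conjI)
    show "\<forall>i. 0 < i \<and> i + 1 < q \<longrightarrow> YY 1 c1 (i + 1) + YY 1 c1 (i - 1) = 0" by (rule YY_rec)
    have "YY 1 c1 1 = c1" using YY_odd[of 1 c1 0] by simp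
    then show "YY 1 c1 1 + cnj Phi * YY 1 c1 (q - 1) = 0" using a unfolding c1_def by (simp add: algebra_simps)
    have "YY 1 c1 0 = 1" using YY_even[of 1 c1 0] by simp
    then show "Phi * YY 1 c1 0 + YY 1 c1 (q - 2) = 0" using b pc uu unfolding c1_def
      by (simp add: mult.assoc[symmetric])
  qed
  then show ?thesis by blast
qed

lemma even_nc:
  assumes e: "even q" and k: "kerc q Phi y" and nc: "Phi \<noteq> (-1)^(q div 2)"
  shows "y 0 = 0 \<and> y 1 = 0"
proof -
  obtain m where m: "q = 2*m" using e by blast
  then obtain m' where m': "m = Suc m'" using q3 by (cases m) auto
  define u :: complex where "u = (-1)^m'"
  have uu: "u * u = 1" unfolding u_def by (rule neg1_sq)
  have q1: "q - 1 = 2*m'+1" using m m' by simp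
  have qq: "q - 2 = 2*m'" using m m' by simp
  have a: "y (q-1) = u * y 1" unfolding q1 using kerc_vals(2)[OF k, of m'] m m' u_def by simp
  have b: "y (q-2) = u * y 0" unfolding qq using kerc_vals(1)[OF k, of m'] m m' u_def by simp
  have e1: "y 1 + cnj Phi * y (q-1) = 0" and e2: "Phi * y 0 + y (q-2) = 0"
    using k by (auto simp: kerc_def)
  have nc': "Phi \<noteq> - u" using nc m m' u_def by simp
  have "(Phi + u) * y 0 = 0" using e2 b by (simp add: algebra_simps)
  moreover have "Phi + u \<noteq> 0" using nc' by (metis eq_neg_iff_add_eq_0)
  ultimately have y0: "y 0 = 0" by simp
  have "(1 + u * cnj Phi) * y 1 = 0" using e1 a by (simp add: algebra_simps)
  moreover have "1 + u * cnj Phi \<noteq> 0"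
  proof
    assume "1 + u * cnj Phi = 0"
    then have "u * (1 + u * cnj Phi) = 0" by simp
    then have "u + (u * u) * cnj Phi = 0" by (simp add: algebra_simps)
    then have "u + cnj Phi = 0" using uu by simp
    then have "cnj Phi = - u" by (metis eq_neg_iff_add_eq_0 add.commute)
    then have "Phi = - u" using u_def by (metis complex_cnj_cnj complex_cnj_minus cnj_neg1_pow)
    then show False using nc' by simp
  qed
  ultimately have "y 1 = 0" by simp
  then show ?thesis using y0 by simp
qed

lemma even_c:
  assumes e: "even q" and c: "Phi = (-1)^(q div 2)"
  shows "kerc q Phi (YY 0 1) \<and> kerc q Phi (YY 1 0)
     \<and> YY 0 1 (q-1) \<noteq> 0 \<and> YY 0 1 (q-2) = 0 \<and> YY 1 0 (q-2) \<noteq> 0 \<and> YY 1 0 (q-1) = 0"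
proof -
  obtain m where m: "q = 2*m" using e by blast
  then obtain m' where m': "m = Suc m'" using q3 by (cases m) auto
  define u :: complex where "u = (-1)^m'"
  have uu: "u * u = 1" unfolding u_def by (rule neg1_sq)
  have q1: "q - 1 = 2*m'+1" using m m' by simp
  have qq: "q - 2 = 2*m'" using m m' by simp
  have P: "Phi = - u" using c m m' u_def by simp
  have cP: "cnj Phi = - u" using P u_def by simp
  have u0: "u \<noteq> 0" using uu by auto
  have v1: "YY 0 1 (q-1) = u" "YY 0 1 (q-2) = 0" "YY 1 0 (q-2) = u" "YY 1 0 (q-1) = 0"
    unfolding q1 qq YY_odd YY_even u_def by simp_all
  have v0: "YY 0 1 0 = 0" "YY 0 1 1 = 1" "YY 1 0 0 = 1" "YY 1 0 1 = 0"
    using YY_even[of _ _ 0] YY_odd[of _ _ 0] by simp_all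
  have k1: "kerc q Phi (YY 0 1)" unfolding kerc_def using YY_rec v1 v0 cP uu by simp
  have k2: "kerc q Phi (YY 1 0)" unfolding kerc_def using YY_rec v1 v0 P uu by simp
  show ?thesis using k1 k2 v1 u0 by simp
qed

end

lemma col_comb:
  fixes A :: "'a :: field mat"
  assumes A: "A \<in> carrier_mat n n" and u: "u \<in> carrier_vec n" and Au: "A *\<^sub>v u = 0\<^sub>v n"
    and mk: "m \<le> k" "k < n" and uk: "u $ k \<noteq> 0"
    and uz: "\<forall>j. m \<le> j \<and> j < n \<and> j \<noteq> k \<longrightarrow> u $ j = 0"
  shows "\<exists>w\<in>carrier_vec m. col A k = mat n m (\<lambda>(i,j). A $$ (i,j)) *\<^sub>v w"
proof
  define w where "w = vec m (\<lambda>j. - u $ j / u $ k)"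
  show "w \<in> carrier_vec m" by (simp add: w_def)
  show "col A k = mat n m (\<lambda>(i,j). A $$ (i,j)) *\<^sub>v w"
  proof (rule eq_vecI)
    fix i assume "i < dim_vec (mat n m (\<lambda>(i,j). A $$ (i,j)) *\<^sub>v w)"
    then have i: "i < n" by simp
    have "0 = (A *\<^sub>v u) $ i" using Au i by simp
    also have "\<dots> = (\<Sum>j<n. A $$ (i,j) * u $ j)" by (rule mv_entry[OF A u i])
    also have "\<dots> = (\<Sum>j\<in>{0..<m}. A $$ (i,j) * u $ j) + (\<Sum>j\<in>{m..<n}. A $$ (i,j) * u $ j)"
      using mk by (simp add: lessThan_atLeast0 sum.atLeastLessThan_concat)
    also have "(\<Sum>j\<in>{m..<n}. A $$ (i,j) * u $ j) = (\<Sum>j\<in>{m..<n}. if j = k then A $$ (i,j) * u $ j else 0)"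
      using uz by (intro sum.cong) auto
    also have "\<dots> = A $$ (i,k) * u $ k" using mk by (subst sum.delta; auto)
    finally have e: "(\<Sum>j\<in>{0..<m}. A $$ (i,j) * u $ j) = - (A $$ (i,k) * u $ k)"
      by (simp add: eq_neg_iff_add_eq_0)
    have "(mat n m (\<lambda>(i,j). A $$ (i,j)) *\<^sub>v w) $ i = (\<Sum>j<m. A $$ (i,j) * w $ j)"
      by (subst mv_entry[of _ n m]) (auto simp: w_def i intro!: sum.cong)
    also have "\<dots> = (\<Sum>j\<in>{0..<m}. A $$ (i,j) * u $ j) * (- 1 / u $ k)"
      by (simp add: w_def lessThan_atLeast0 sum_distrib_right sum_divide_distrib sum_negf)
    also have "\<dots> = A $$ (i,k)" using uk e by (simp add: field_simps)
    also have "\<dots> = col A k $ i" using A i mk by simp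
    finally show "col A k $ i = (mat n m (\<lambda>(i,j). A $$ (i,j)) *\<^sub>v w) $ i" by simp
  qed (use A in simp)
qed

context cyc begin

lemma ker_y: "x \<in> carrier_vec q \<Longrightarrow> AA *\<^sub>v x = 0\<^sub>v q \<Longrightarrow> kerc q Phi (\<lambda>j. PP q \<phi> j * x $ j)"
proof -
  assume x: "x \<in> carrier_vec q" and z: "AA *\<^sub>v x = 0\<^sub>v q"
  have xy: "x $ j = cnj (PP q \<phi> j) * (PP q \<phi> j * x $ j)" if j: "j < q" for j
  proof -
    have "PP q \<phi> j * cnj (PP q \<phi> j) = 1" using PP_unit j by simp
    then show ?thesis by (simp add: algebra_simps)
  qed
  show ?thesis using ker_iff[OF x xy] z by simp
qed

lemma x_zero:
  assumes x: "x \<in> carrier_vec q" and h: "\<And>j. j < q \<Longrightarrow> PP q \<phi> j * x $ j = 0"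
  shows "x = 0\<^sub>v q"
proof (rule eq_vecI)
  fix j assume "j < dim_vec (0\<^sub>v q :: complex vec)"
  then have j: "j < q" by simp
  have "PP q \<phi> j \<noteq> 0" using PP_nz j by simp
  then show "x $ j = 0\<^sub>v q $ j" using h[OF j] j by simp
qed (use x in simp)

lemma mk_x:
  assumes k: "kerc q Phi y"
  shows "AA *\<^sub>v vec q (\<lambda>j. cnj (PP q \<phi> j) * y j) = 0\<^sub>v q"
proof -
  have c: "vec q (\<lambda>j. cnj (PP q \<phi> j) * y j) \<in> carrier_vec q" by simp
  have xy: "vec q (\<lambda>j. cnj (PP q \<phi> j) * y j) $ j = cnj (PP q \<phi> j) * y j" if "j < q" for j
    using that by simp
  show ?thesis using ker_iff[OF c xy] k by simp
qed

lemma triv_even: "even q \<Longrightarrow> Phi \<noteq> (-1)^(q div 2) \<Longrightarrow> x \<in> carrier_vec q \<Longrightarrow> AA *\<^sub>v x = 0\<^sub>v q \<Longrightarrow> x = 0\<^sub>v q"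
proof -
  assume a: "even q" "Phi \<noteq> (-1)^(q div 2)" "x \<in> carrier_vec q" "AA *\<^sub>v x = 0\<^sub>v q"
  have k: "kerc q Phi (\<lambda>j. PP q \<phi> j * x $ j)" using ker_y a by blast
  have y01: "PP q \<phi> 0 * x $ 0 = 0 \<and> PP q \<phi> 1 * x $ 1 = 0" using even_nc[OF a(1) k a(2)] by simp
  show ?thesis using kerc_zero[OF k] y01 x_zero[OF a(3)] by simp
qed

lemma triv_odd: "odd q \<Longrightarrow> Re Phi \<noteq> 0 \<Longrightarrow> x \<in> carrier_vec q \<Longrightarrow> AA *\<^sub>v x = 0\<^sub>v q \<Longrightarrow> x = 0\<^sub>v q"
proof -
  assume a: "odd q" "Re Phi \<noteq> 0" "x \<in> carrier_vec q" "AA *\<^sub>v x = 0\<^sub>v q"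
  have k: "kerc q Phi (\<lambda>j. PP q \<phi> j * x $ j)" using ker_y a by blast
  have y0: "PP q \<phi> 0 * x $ 0 = 0" using odd_nc[OF a(1) k a(2)] by simp
  have y1: "PP q \<phi> 1 * x $ 1 = 0" using odd_y1[OF a(1) k] y0 by simp
  show ?thesis using kerc_zero[OF k] y0 y1 x_zero[OF a(3)] by simp
qed

lemma lb_odd: "odd q \<Longrightarrow> x \<in> carrier_vec q \<Longrightarrow> AA *\<^sub>v x = 0\<^sub>v q \<Longrightarrow> \<forall>j<1. x $ j = 0 \<Longrightarrow> x = 0\<^sub>v q"
proof -
  assume a: "odd q" "x \<in> carrier_vec q" "AA *\<^sub>v x = 0\<^sub>v q" "\<forall>j<1. x $ j = 0"
  have k: "kerc q Phi (\<lambda>j. PP q \<phi> j * x $ j)" using ker_y a by blast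
  have y0: "PP q \<phi> 0 * x $ 0 = 0" using a(4) by simp
  have y1: "PP q \<phi> 1 * x $ 1 = 0" using odd_y1[OF a(1) k] y0 by simp
  show ?thesis using kerc_zero[OF k] y0 y1 x_zero[OF a(2)] by simp
qed

lemma lb_even: "x \<in> carrier_vec q \<Longrightarrow> AA *\<^sub>v x = 0\<^sub>v q \<Longrightarrow> \<forall>j<2. x $ j = 0 \<Longrightarrow> x = 0\<^sub>v q"
proof -
  assume a: "x \<in> carrier_vec q" "AA *\<^sub>v x = 0\<^sub>v q" "\<forall>j<2. x $ j = 0"
  have k: "kerc q Phi (\<lambda>j. PP q \<phi> j * x $ j)" using ker_y a by blast
  have y0: "PP q \<phi> 0 * x $ 0 = 0" using a(3) by simp
  have y1: "PP q \<phi> 1 * x $ 1 = 0" using a(3) by simp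
  show ?thesis using kerc_zero[OF k] y0 y1 x_zero[OF a(1)] by simp
qed

lemma nontriv_odd: "odd q \<Longrightarrow> Re Phi = 0 \<Longrightarrow> \<exists>x\<in>carrier_vec q. x \<noteq> 0\<^sub>v q \<and> AA *\<^sub>v x = 0\<^sub>v q"
proof -
  assume a: "odd q" "Re Phi = 0"
  obtain c1 where k: "kerc q Phi (YY 1 c1)" using odd_c[OF a] by blast
  define x where "x = vec q (\<lambda>j. cnj (PP q \<phi> j) * YY 1 c1 j)"
  have "x $ 0 = 1" using q3 YY_even[of 1 c1 0] by (simp add: x_def PP0)
  then have "x \<noteq> 0\<^sub>v q" using q3 by auto
  moreover have "AA *\<^sub>v x = 0\<^sub>v q" using mk_x[OF k] by (simp add: x_def)
  ultimately show ?thesis by (auto simp: x_def)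
qed

lemma span_even:
  assumes e: "even q" and c: "Phi = (-1)^(q div 2)" and k: "q - 2 \<le> k" "k < q"
  shows "\<exists>w\<in>carrier_vec (q-2). col AA k = mat q (q-2) (\<lambda>(i,j). AA $$ (i,j)) *\<^sub>v w"
proof -
  note E = even_c[OF e c]
  have ne: "cnj (PP q \<phi> j) \<noteq> 0" if "j < q" for j using PP_nz[of j] that by simp
  have q2: "q - 2 < q" "q - 1 < q" "q - 2 \<noteq> q - 1" using q3 by auto
  consider "k = q - 2" | "k = q - 1" using k by linarith
  then show ?thesis
  proof cases
    case 1
    define u where "u = vec q (\<lambda>j. cnj (PP q \<phi> j) * YY 1 0 j)"
    have "u \<in> carrier_vec q" "AA *\<^sub>v u = 0\<^sub>v q" using mk_x E by (auto simp: u_def)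
    moreover have "u $ k \<noteq> 0" using 1 E q2 ne by (simp add: u_def)
    moreover have "\<forall>j. q-2 \<le> j \<and> j < q \<and> j \<noteq> k \<longrightarrow> u $ j = 0"
    proof (intro allI impI)
      fix j assume "q-2 \<le> j \<and> j < q \<and> j \<noteq> k"
      then have "j = q - 1" "j < q" using 1 by auto
      then show "u $ j = 0" using E by (simp add: u_def)
    qed
    ultimately show ?thesis using col_comb[OF AA_carrier] k by blast
  next
    case 2
    define u where "u = vec q (\<lambda>j. cnj (PP q \<phi> j) * YY 0 1 j)"
    have "u \<in> carrier_vec q" "AA *\<^sub>v u = 0\<^sub>v q" using mk_x E by (auto simp: u_def)
    moreover have "u $ k \<noteq> 0" using 2 E q2 ne by (simp add: u_def)
    moreover have "\<forall>j. q-2 \<le> j \<and> j < q \<and> j \<noteq> k \<longrightarrow> u $ j = 0"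
    proof (intro allI impI)
      fix j assume "q-2 \<le> j \<and> j < q \<and> j \<noteq> k"
      then have "j = q - 2" "j < q" using 2 by auto
      then show "u $ j = 0" using E by (simp add: u_def)
    qed
    ultimately show ?thesis using col_comb[OF AA_carrier] k by blast
  qed
qed

lemma rank_AA:
  "vec_space.rank q AA = (if even q then (if Phi = (-1)^(q div 2) then q - 2 else q)
                          else (if Re Phi = 0 then q - 1 else q))"
proof -
  have le: "vec_space.rank q AA \<le> q" by (rule vec_space.rank_le_nc[OF AA_carrier])
  have full: "vec_space.rank q AA = q" if "\<And>x. x \<in> carrier_vec q \<Longrightarrow> AA *\<^sub>v x = 0\<^sub>v q \<Longrightarrow> x = 0\<^sub>v q"
  proof -
    have "det AA \<noteq> 0" using that det_0_iff_vec_prod_zero_field[OF AA_carrier] by blast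
    then show ?thesis using vec_space.det_rank_iff[OF AA_carrier] by blast
  qed
  show ?thesis
  proof (cases "even q")
    case e: True
    show ?thesis
    proof (cases "Phi = (-1)^(q div 2)")
      case c: True
      have "q - 2 \<le> vec_space.rank q AA"
        by (rule vec_space.rank_lb[OF AA_carrier]) (use q3 lb_even in auto)
      moreover have "vec_space.rank q AA \<le> q - 2"
        by (rule vec_space.rank_ub[OF AA_carrier]) (use span_even[OF e c] in auto)
      ultimately show ?thesis using e c by simp
    next
      case False
      have "vec_space.rank q AA = q" by (rule full) (use triv_even[OF e False] in blast)
      then show ?thesis using e False by simp
    qed
  next
    case o: False
    show ?thesis
    proof (cases "Re Phi = 0")
      case c: True
      have "q - 1 \<le> vec_space.rank q AA"
        by (rule vec_space.rank_lb[OF AA_carrier]) (use q3 lb_odd[OF o] in auto)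
      moreover have "vec_space.rank q AA \<noteq> q"
      proof
        assume r: "vec_space.rank q AA = q"
        have "det AA \<noteq> 0" using r vec_space.det_rank_iff[OF AA_carrier] by blast
        then show False using nontriv_odd[OF o c] det_0_iff_vec_prod_zero_field[OF AA_carrier] by blast
      qed
      ultimately show ?thesis using o c le by simp
    next
      case False
      have "vec_space.rank q AA = q" by (rule full) (use triv_odd[OF o False] in blast)
      then show ?thesis using o False by simp
    qed
  qed
qed

end

lemma suc_mod_inj: "i < q \<Longrightarrow> j < q \<Longrightarrow> Suc i mod q = Suc j mod q \<Longrightarrow> i = j"
  using suc_mod[of i q] suc_mod[of j q] by (auto split: if_splits)

lemma adj_suc': "q \<ge> 3 \<Longrightarrow> i < q \<Longrightarrow> cycle_adj q i (Suc i mod q)"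
  by (simp add: cycle_adj_def)

lemma edge_card:
  assumes q3: "q \<ge> 3"
  shows "card (edge_set {0..<q} (cycle_adj q)) = q"
proof -
  define f where "f = (\<lambda>i. {i, Suc i mod q})"
  have eq: "edge_set {0..<q} (cycle_adj q) = f ` {0..<q}"
  proof
    show "edge_set {0..<q} (cycle_adj q) \<subseteq> f ` {0..<q}"
    proof
      fix e assume "e \<in> edge_set {0..<q} (cycle_adj q)"
      then have "e \<in> {{x, y} |x y. x \<in> {0..<q} \<and> y \<in> {0..<q} \<and> cycle_adj q x y}"
        unfolding edge_set_def .
      then obtain x y where e: "e = {x, y}" "x \<in> {0..<q}" "y \<in> {0..<q}" "cycle_adj q x y"
        by (elim CollectE exE conjE)
      have "y = Suc x mod q \<or> x = Suc y mod q" using e(4) unfolding cycle_adj_def by (elim conjE)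
      then show "e \<in> f ` {0..<q}"
      proof
        assume "y = Suc x mod q"
        then have "e = f x" using e(1) by (simp add: f_def)
        then show ?thesis using e(2) by (rule image_eqI)
      next
        assume "x = Suc y mod q"
        then have "e = f y" using e(1) unfolding f_def by (simp only: insert_commute)
        then show ?thesis using e(3) by (rule image_eqI)
      qed
    qed
  next
    show "f ` {0..<q} \<subseteq> edge_set {0..<q} (cycle_adj q)"
    proof
      fix e assume "e \<in> f ` {0..<q}"
      then obtain i where i0: "i \<in> {0..<q}" "e = f i" by (rule imageE) simp
      then have i: "i < q" "e = {i, Suc i mod q}" by (simp_all add: f_def)
      have s: "Suc i mod q \<in> {0..<q}" using i by simp
      have adj: "cycle_adj q i (Suc i mod q)" by (rule adj_suc'[OF q3 i(1)])
      have "e \<in> {{x, y} |x y. x \<in> {0..<q} \<and> y \<in> {0..<q} \<and> cycle_adj q x y}"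
      proof (rule CollectI, rule exI[of _ i], rule exI[of _ "Suc i mod q"])
        show "e = {i, Suc i mod q} \<and> i \<in> {0..<q} \<and> Suc i mod q \<in> {0..<q} \<and> cycle_adj q i (Suc i mod q)"
          using i(2) i0(1) s adj by (intro conjI)
      qed
      then show "e \<in> edge_set {0..<q} (cycle_adj q)" unfolding edge_set_def .
    qed
  qed
  have inj: "inj_on f {0..<q}"
  proof
    fix i j assume i: "i \<in> {0..<q}" and j: "j \<in> {0..<q}" and fij: "f i = f j"
    show "i = j"
    proof (rule ccontr)
      assume ne: "i \<noteq> j"
      have "i \<in> f i" by (simp add: f_def)
      then have "i \<in> f j" using fij by simp
      then have a: "i = Suc j mod q" using ne by (simp add: f_def)
      have "j \<in> f j" by (simp add: f_def)
      then have "j \<in> f i" using fij by simp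
      then have b: "j = Suc i mod q" using ne by (simp add: f_def)
      have iq: "i < q" and jq: "j < q" using i j by auto
      have a': "i = (if Suc j = q then 0 else Suc j)" using a suc_mod[OF jq] by simp
      have b': "j = (if Suc i = q then 0 else Suc i)" using b suc_mod[OF iq] by simp
      have A: "(i = 0 \<and> Suc j = q) \<or> i = Suc j" using a' by (simp split: if_split_asm)
      have B: "(j = 0 \<and> Suc i = q) \<or> j = Suc i" using b' by (simp split: if_split_asm)
      show False using A B q3 by linarith
    qed
  qed
  show ?thesis unfolding eq using card_image[OF inj] by simp
qed

lemma comp1:
  assumes q3: "q \<ge> 3"
  shows "num_components {0..<q} (cycle_adj q) = 1"
proof -
  define R where "R = (\<lambda>a b. a \<in> {0..<q} \<and> b \<in> {0..<q} \<and> cycle_adj q a b)"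
  have fw: "i < q \<Longrightarrow> R\<^sup>*\<^sup>* 0 i" for i
  proof (induction i)
    case (Suc i)
    have "R i (Suc i)" using Suc.prems unfolding R_def cycle_adj_def by auto
    then show ?case using Suc by (meson Suc_lessD rtranclp.rtrancl_into_rtrancl)
  qed simp
  have bw: "i < q \<Longrightarrow> R\<^sup>*\<^sup>* i 0" for i
  proof (induction i)
    case (Suc i)
    have "R (Suc i) i" using Suc.prems unfolding R_def cycle_adj_def by auto
    then show ?case using Suc by (meson Suc_lessD converse_rtranclp_into_rtranclp)
  qed simp
  have all: "connected_rel {0..<q} (cycle_adj q) = {0..<q} \<times> {0..<q}"
  proof -
    have "R\<^sup>*\<^sup>* x y" if "x < q" "y < q" for x y
      using bw[OF that(1)] fw[OF that(2)] by (rule rtranclp_trans)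
    then show ?thesis unfolding connected_rel_def R_def[symmetric] by auto
  qed
  have im: "({0..<q} \<times> {0..<q}) `` {x} = {0..<q::nat}" if "x < q" for x
    using that by auto
  have "{0..<q} // ({0..<q} \<times> {0..<q}) = {{0..<q::nat}}"
  proof -
    have "{0..<q} // ({0..<q} \<times> {0..<q}) = (\<Union>x\<in>{0..<q}. {{0..<q::nat}})"
      unfolding quotient_def using im by (intro SUP_cong) auto
    also have "\<dots> = {{0..<q}}" using q3 by auto
    finally show ?thesis .
  qed
  then show ?thesis unfolding num_components_def all by simp
qed

lemma indep:
  assumes q3: "q \<ge> 3"
  shows "independence_number {0..<q} (cycle_adj q) = q div 2"
proof -
  let ?I = "{S. independent_set {0..<q} (cycle_adj q) S}"
  have fin: "finite ?I"
    by (rule finite_subset[of _ "Pow {0..<q}"]) (auto simp: independent_set_def)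
  have ub: "card S \<le> q div 2" if S: "S \<in> ?I" for S
  proof -
    have Ss: "S \<subseteq> {0..<q}" and ind: "\<forall>x\<in>S. \<forall>y\<in>S. \<not> cycle_adj q x y"
      using S unfolding independent_set_def by blast+
    define f where "f = (\<lambda>i. Suc i mod q)"
    have inj: "inj_on f S"
    proof (rule inj_onI)
      fix a b assume ab: "a \<in> S" "b \<in> S" "f a = f b"
      have "a < q" "b < q" using ab Ss by auto
      then show "a = b" using suc_mod_inj[of a q b] ab(3) by (simp add: f_def)
    qed
    have img: "f ` S \<subseteq> {0..<q} - S"
    proof
      fix z assume "z \<in> f ` S"
      then obtain i where i: "i \<in> S" "z = Suc i mod q" by (auto simp: f_def)
      have iq: "i < q" using i Ss by auto
      have "z < q" using i q3 by simp
      moreover have "z \<notin> S" using ind i adj_suc'[OF q3 iq] by blast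
      ultimately show "z \<in> {0..<q} - S" by simp
    qed
    have "card S = card (f ` S)" using card_image[OF inj] by simp
    also have "\<dots> \<le> card ({0..<q} - S)" by (rule card_mono[OF _ img]) simp
    also have "\<dots> = q - card S" using Ss by (simp add: card_Diff_subset finite_subset)
    finally have "2 * card S \<le> q" by simp
    then show ?thesis by linarith
  qed
  define W where "W = (\<lambda>k. 2*k) ` {0..<q div 2}"
  have Wi: "W \<in> ?I"
    unfolding independent_set_def
  proof (intro CollectI conjI ballI)
    show "W \<subseteq> {0..<q}" unfolding W_def by auto
    fix x y assume x: "x \<in> W" and y: "y \<in> W"
    obtain a where a: "x = 2*a" "a < q div 2" using x unfolding W_def by auto
    obtain b where b: "y = 2*b" "b < q div 2" using y unfolding W_def by auto
    have h2: "2 * (q div 2) \<le> q" by simp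
    have ax: "Suc x mod q = Suc x" using a h2 by (intro mod_less) linarith
    have by': "Suc y mod q = Suc y" using b h2 by (intro mod_less) linarith
    show "\<not> cycle_adj q x y"
    proof
      assume "cycle_adj q x y"
      then have "y = Suc x \<or> x = Suc y" unfolding cycle_adj_def ax by' by blast
      then have "2*b = Suc (2*a) \<or> 2*a = Suc (2*b)" using a b by simp
      then show False by presburger
    qed
  qed
  have cW: "card W = q div 2" unfolding W_def by (subst card_image) (auto simp: inj_on_def)
  show ?thesis unfolding independence_number_def
  proof (rule Max_eqI)
    show "finite (card ` ?I)" using fin by simp
    show "\<And>y. y \<in> card ` ?I \<Longrightarrow> y \<le> q div 2" using ub by auto
    show "q div 2 \<in> card ` ?I" using Wi cW by force
  qed
qed

lemma re_neg1_pow: "Re ((-1)^k * z) = (-1)^k * Re z"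
  by (cases "even k") auto

theorem lemma4p3:
  fixes q :: nat and \<phi> :: "nat \<Rightarrow> nat \<Rightarrow> complex"
  assumes "q \<ge> 3"
    and "gain_function {0..<q} (cycle_adj q) \<phi>"
  shows "int (gain_rank q (cycle_adj q) \<phi>)
           = 2 * int q - 2 * cyclomatic_number {0..<q} (cycle_adj q)
             - 2 * int (independence_number {0..<q} (cycle_adj q))
         \<longleftrightarrow> (even q \<and> cycle_gain q \<phi> = (-1) ^ (q div 2))
             \<or> (odd q \<and> Re ((-1) ^ ((q - 1) div 2) * cycle_gain q \<phi>) = 0)"
proof -
  interpret cyc q \<phi> using assms by unfold_locales
  have c: "cyclomatic_number {0..<q} (cycle_adj q) = 1"
    using edge_card[OF assms(1)] comp1[OF assms(1)] by (simp add: cyclomatic_number_def)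
  have a: "independence_number {0..<q} (cycle_adj q) = q div 2" by (rule indep[OF assms(1)])
  have r: "gain_rank q (cycle_adj q) \<phi> = (if even q then (if Phi = (-1)^(q div 2) then q - 2 else q)
                          else (if Re Phi = 0 then q - 1 else q))"
    unfolding gain_rank_def by (rule rank_AA)
  have re: "Re ((-1) ^ ((q - 1) div 2) * Phi) = 0 \<longleftrightarrow> Re Phi = 0"
    by (simp add: re_neg1_pow)
  have q2: "int (q - 2) = int q - 2" "int (q - 1) = int q - 1" using assms(1) by auto
  show ?thesis
  proof (cases "even q")
    case e: True
    have d: "2 * int (q div 2) = int q" using e by (metis even_two_times_div_two of_nat_mult of_nat_numeral)
    have rhs: "2 * int q - 2 * cyclomatic_number {0..<q} (cycle_adj q)
             - 2 * int (independence_number {0..<q} (cycle_adj q)) = int q - 2"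
      unfolding c a using d by simp
    show ?thesis
    proof (cases "Phi = (-1)^(q div 2)")
      case True
      then have "gain_rank q (cycle_adj q) \<phi> = q - 2" using r e by simp
      then show ?thesis unfolding rhs using q2 e True by simp
    next
      case False
      then have "gain_rank q (cycle_adj q) \<phi> = q" using r e by simp
      then show ?thesis unfolding rhs using e False by simp
    qed
  next
    case o: False
    have d: "2 * int (q div 2) = int q - 1"
    proof -
      have "2 * (q div 2) + 1 = q" using o by presburger
      then show ?thesis by linarith
    qed
    have rhs: "2 * int q - 2 * cyclomatic_number {0..<q} (cycle_adj q)
             - 2 * int (independence_number {0..<q} (cycle_adj q)) = int q - 1"
      unfolding c a using d by simp
    show ?thesis
    proof (cases "Re Phi = 0")
      case True
      then have "gain_rank q (cycle_adj q) \<phi> = q - 1" using r o by simp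
      then show ?thesis unfolding rhs using q2 o True re by simp
    next
      case False
      then have "gain_rank q (cycle_adj q) \<phi> = q" using r o by simp
      then show ?thesis unfolding rhs using o False re by simp
    qed
  qed
qed

end
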